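(* Let $\xi=e^{i\pi/5}$, $\tau=\frac{1+\sqrt5}{2}$. For $n\in\mathbb{N}$ let $L(n)=\{\sum_{j=0}^9 n_j\xi^j: n_j\in\mathbb{N}_0,\ \sum_j n_j\le n\}\cap\mathbb{R}$. Let $\mathbb{Z}[\tau]=\mathbb{Z}+\mathbb{Z}\tau$ and let $x\mapsto x'$ be the automorphism $a+b\sqrt5\mapsto a-b\sqrt5$ of $\mathbb{Q}[\sqrt5]$. For a bounded interval $\Omega$ let $\Sigma(\Omega)=\{x\in\mathbb{Z}[\tau]: x'\in\Omega\}$. Then $L(n)\subset\Sigma([-n,n])\cap[-n,n]$.
   Context: $\Sigma(\Omega)$ is the one-dimensional cut-and-project quasicrystal with acceptance window $\Omega$. *)

theory Defs
  imports Complex_Main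
begin

definition xi :: complex where "xi = exp (\<i> * of_real pi / 5)"

definition tau :: real where "tau = (1 + sqrt 5) / 2"

definition L :: "nat \<Rightarrow> real set" where
  "L n = {x. \<exists>c :: nat \<Rightarrow> nat. (\<Sum>j<10. c j) \<le> n \<and>
              complex_of_real x = (\<Sum>j<10. of_nat (c j) * xi ^ j)}"

definition Ztau :: "real set" where
  "Ztau = {x. \<exists>a b :: int. x = of_int a + of_int b * tau}"

definition qconj :: "real \<Rightarrow> real" where
  "qconj x = (THE y. \<exists>p q :: rat. x = of_rat p + of_rat q * sqrt 5 \<and>
                                   y = of_rat p - of_rat q * sqrt 5)"

definition Sigma_qc :: "real set \<Rightarrow> real set" where
  "Sigma_qc \<Omega> = {x \<in> Ztau. qconj x \<in> \<Omega>}"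

end

theory Submission
  imports Defs "HOL-Computational_Algebra.Primes"
begin

lemma sq5: "(r::rat)^2 \<noteq> 5"
proof
  assume h: "r^2 = 5"
  have "real_of_rat r \<in> \<rat>" by simp
  then obtain m n where n: "n \<noteq> 0" and e: "\<bar>real_of_rat r\<bar> = real m / real n" and c: "coprime m n"
    by (rule Rats_abs_nat_div_natE)
  have "(real_of_rat r)^2 = 5" using h by (metis of_rat_numeral_eq of_rat_power)
  hence "(real m / real n)^2 = 5" using e by (metis power2_abs)
  hence "real (m^2) = real (5 * n^2)" using n by (simp add: field_simps)
  hence mn: "m^2 = 5 * n^2" by linarith
  have p: "prime (5::nat)" unfolding prime_nat_iff'
  proof (intro conjI ballI)
    fix k :: nat assume "k \<in> {2..<5}"
    hence "k = 2 \<or> k = 3 \<or> k = 4" by auto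
    thus "\<not> k dvd 5" by auto
  qed simp
  have "5 dvd m^2" using mn by simp
  hence "5 dvd m" using p prime_dvd_power by blast
  then obtain k where k: "m = 5*k" by blast
  have "n^2 = 5 * k^2" using mn k by (simp add: power_mult_distrib)
  hence "5 dvd n^2" by simp
  hence "5 dvd n" using p prime_dvd_power by blast
  thus False using c \<open>5 dvd m\<close> p
    by (metis coprime_common_divisor_nat not_prime_1)
qed

lemma indep:
  fixes a b :: rat
  assumes "of_rat a + of_rat b * sqrt 5 = 0"
  shows "b = 0 \<and> a = 0"
proof (cases "b = 0")
  case True thus ?thesis using assms by simp
next
  case False
  have "sqrt 5 = of_rat (- a / b)" using assms False
    by (simp add: of_rat_divide of_rat_minus field_simps)
  hence "(of_rat ((- a / b)^2) :: real) = 5" by (metis of_rat_power real_sqrt_pow2 zero_le_numeral)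
  hence "(- a / b)^2 = 5" by (metis of_rat_eq_iff of_rat_numeral_eq)
  thus ?thesis using sq5 by blast
qed

lemma qconj_eq: "qconj (of_rat p + of_rat q * sqrt 5) = of_rat p - of_rat q * sqrt 5"
  unfolding qconj_def
proof (rule the_equality)
  show "\<exists>p' q'. of_rat p + of_rat q * sqrt 5 = of_rat p' + of_rat q' * sqrt 5 \<and>
      of_rat p - of_rat q * sqrt 5 = of_rat p' - of_rat q' * sqrt 5" by blast
next
  fix y assume "\<exists>p' q'. of_rat p + of_rat q * sqrt 5 = of_rat p' + of_rat q' * sqrt 5 \<and>
      y = of_rat p' - of_rat q' * sqrt 5"
  then obtain p' q' where h: "of_rat p + of_rat q * sqrt 5 = of_rat p' + of_rat q' * sqrt 5"
    and y: "y = of_rat p' - of_rat q' * sqrt 5" by blast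
  have "of_rat (p - p') + of_rat (q - q') * sqrt 5 = 0" using h
    by (simp add: of_rat_diff algebra_simps)
  hence "q - q' = 0 \<and> p - p' = 0" by (rule indep)
  thus "y = of_rat p - of_rat q * sqrt 5" using y by simp
qed

lemma tau_sq: "tau^2 = tau + 1"
  unfolding tau_def by (simp add: power2_eq_square field_simps)

lemma tau_bounds: "1 < tau" "tau < 2"
proof -
  have "1 < sqrt 5" by (simp add: real_less_rsqrt)
  moreover have "sqrt 5 < 3" by (simp add: real_sqrt_less_iff real_less_lsqrt)
  ultimately show "1 < tau" "tau < 2" unfolding tau_def by simp_all
qed

lemma qconj_Ztau: "qconj (of_int a + of_int b * tau) = of_int a + of_int b * (1 - tau)"
proof -
  have "of_int a + of_int b * tau = of_rat (of_int a + of_int b / 2) + of_rat (of_int b / 2) * sqrt 5"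
    by (simp add: tau_def of_rat_add of_rat_divide of_rat_mult field_simps)
  moreover have "of_int a + of_int b * (1 - tau) = (of_rat (of_int a + of_int b / 2) - of_rat (of_int b / 2) * sqrt 5 :: real)"
    by (simp add: tau_def of_rat_add of_rat_divide of_rat_mult field_simps)
  ultimately show ?thesis using qconj_eq by simp
qed

lemma Ztau_indep:
  assumes "of_int A + of_int B * tau = 0"
  shows "A = 0 \<and> B = 0"
proof -
  have "of_rat (of_int A + of_int B / 2) + of_rat (of_int B / 2) * sqrt 5 = (0::real)"
    using assms by (simp add: tau_def of_rat_add of_rat_divide of_rat_mult field_simps)
  hence "(of_int B / 2 :: rat) = 0 \<and> of_int A + of_int B / 2 = (0::rat)" by (rule indep)
  thus ?thesis by simp
qed

lemma cos_pi5: "cos (pi/5) = tau/2"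
proof -
  define c where "c = cos (pi/5)"
  have "-(pi/2) < pi/5" "pi/5 < pi/2" using pi_gt_zero by linarith+
  hence cpos: "c > 0" unfolding c_def by (rule cos_gt_zero_pi)
  have "cos (3 * (pi/5)) = cos (pi - 2 * (pi/5))" by (simp add: field_simps)
  hence "4 * c^3 - 3 * c = - (2 * c^2 - 1)"
    unfolding c_def by (simp only: cos_treble_cos cos_pi_minus cos_double_cos)
  hence "(c + 1) * (4 * c^2 - 2 * c - 1) = 0" by (simp add: algebra_simps power2_eq_square power3_eq_cube)
  hence q: "4 * c^2 - 2 * c - 1 = 0" using cpos by simp
  have "4 * (c - tau/2) * (c - (1 - tau)/2) = 4 * c^2 - 2 * c + tau - tau^2"
    by algebra
  also have "\<dots> = 0" using q tau_sq by simp
  finally have "4 * (c - tau/2) * (c - (1 - tau)/2) = 0" .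
  moreover have "c - (1 - tau)/2 \<noteq> 0" using cpos tau_bounds by simp
  ultimately have "c - tau/2 = 0" by (metis mult_eq_0_iff zero_neq_numeral)
  thus ?thesis unfolding c_def by simp
qed

definition S :: real where "S = sin (pi/5)"

lemma S_pos: "S > 0" unfolding S_def by (rule sin_gt_zero) auto

lemma S_sq: "S * S = (3 - tau) / 4"
proof -
  have "S^2 = 1 - (tau/2)^2" unfolding S_def using sin_squared_eq[of "pi/5"] cos_pi5 by simp
  thus ?thesis using tau_sq by (simp add: power2_eq_square field_simps)
qed

lemma xi_eq: "xi = Complex (tau/2) S"
proof -
  have "xi = cis (pi/5)" unfolding xi_def cis_conv_exp by (simp add: field_simps)
  thus ?thesis by (simp add: complex_eq_iff cos_pi5 S_def)
qed

lemma tt: "tau * tau = tau + 1" using tau_sq by (simp add: power2_eq_square)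

definition s2 :: real where "s2 = 2 * S"

lemma s2sq: "s2 * s2 = 3 - tau" using S_sq unfolding s2_def by simp

lemma xi_eq2: "xi = Complex (tau/2) (s2/2)" by (simp add: xi_eq s2_def)

lemma xi_step: "2 * xi^k = Complex a b \<Longrightarrow> m = k + 1 \<Longrightarrow> 4 * xi^m = Complex (a * tau - b * s2) (a * s2 + b * tau)"
proof -
  assume h: "2 * xi^k = Complex a b" and m: "m = k + 1"
  have x2: "2 * xi = Complex tau s2" by (simp add: xi_eq2 complex_eq_iff)
  have "4 * xi^m = (2 * xi^k) * (2 * xi)" unfolding m by (simp add: algebra_simps)
  also have "\<dots> = Complex a b * Complex tau s2" unfolding h x2 ..
  finally show ?thesis by (simp add: complex_eq_iff)
qed

lemma half: "4 * z = Complex (2*a) (2*b) \<Longrightarrow> 2 * z = Complex a b"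
  by (simp add: complex_eq_iff)

lemma q0: "2 * xi^0 = Complex 2 0" by (simp add: complex_eq_iff)

lemma q1: "2 * xi^1 = Complex (tau) (s2)"
proof -
  have e: "4 * xi^1 = Complex ((2) * tau - (0) * s2) ((2) * s2 + (0) * tau)"
    by (rule xi_step[OF q0]) simp
  have a: "(2) * tau - (0) * s2 = 2 * (tau)" using s2sq tt by (algebra | simp)
  have b: "(2) * s2 + (0) * tau = 2 * (s2)" using s2sq tt by (algebra | simp)
  show ?thesis by (rule half[OF e[unfolded a b]])
qed

lemma q2: "2 * xi^2 = Complex (tau-1) (tau*s2)"
proof -
  have e: "4 * xi^2 = Complex ((tau) * tau - (s2) * s2) ((tau) * s2 + (s2) * tau)"
    by (rule xi_step[OF q1]) simp
  have a: "(tau) * tau - (s2) * s2 = 2 * (tau-1)" using s2sq tt by (algebra | simp)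
  have b: "(tau) * s2 + (s2) * tau = 2 * (tau*s2)" using s2sq tt by (algebra | simp)
  show ?thesis by (rule half[OF e[unfolded a b]])
qed

lemma q3: "2 * xi^3 = Complex (1-tau) (tau*s2)"
proof -
  have e: "4 * xi^3 = Complex ((tau-1) * tau - (tau*s2) * s2) ((tau-1) * s2 + (tau*s2) * tau)"
    by (rule xi_step[OF q2]) simp
  have a: "(tau-1) * tau - (tau*s2) * s2 = 2 * (1-tau)" using s2sq tt by (algebra | simp)
  have b: "(tau-1) * s2 + (tau*s2) * tau = 2 * (tau*s2)" using s2sq tt by (algebra | simp)
  show ?thesis by (rule half[OF e[unfolded a b]])
qed

lemma q4: "2 * xi^4 = Complex (-tau) (s2)"
proof -
  have e: "4 * xi^4 = Complex ((1-tau) * tau - (tau*s2) * s2) ((1-tau) * s2 + (tau*s2) * tau)"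
    by (rule xi_step[OF q3]) simp
  have a: "(1-tau) * tau - (tau*s2) * s2 = 2 * (-tau)" using s2sq tt by (algebra | simp)
  have b: "(1-tau) * s2 + (tau*s2) * tau = 2 * (s2)" using s2sq tt by (algebra | simp)
  show ?thesis by (rule half[OF e[unfolded a b]])
qed

lemma q5: "2 * xi^5 = Complex (-2) (0)"
proof -
  have e: "4 * xi^5 = Complex ((-tau) * tau - (s2) * s2) ((-tau) * s2 + (s2) * tau)"
    by (rule xi_step[OF q4]) simp
  have a: "(-tau) * tau - (s2) * s2 = 2 * (-2)" using s2sq tt by (algebra | simp)
  have b: "(-tau) * s2 + (s2) * tau = 2 * (0)" using s2sq tt by (algebra | simp)
  show ?thesis by (rule half[OF e[unfolded a b]])
qed

lemma q6: "2 * xi^6 = Complex (-tau) (-s2)"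
proof -
  have e: "4 * xi^6 = Complex ((-2) * tau - (0) * s2) ((-2) * s2 + (0) * tau)"
    by (rule xi_step[OF q5]) simp
  have a: "(-2) * tau - (0) * s2 = 2 * (-tau)" using s2sq tt by (algebra | simp)
  have b: "(-2) * s2 + (0) * tau = 2 * (-s2)" using s2sq tt by (algebra | simp)
  show ?thesis by (rule half[OF e[unfolded a b]])
qed

lemma q7: "2 * xi^7 = Complex (1-tau) (-tau*s2)"
proof -
  have e: "4 * xi^7 = Complex ((-tau) * tau - (-s2) * s2) ((-tau) * s2 + (-s2) * tau)"
    by (rule xi_step[OF q6]) simp
  have a: "(-tau) * tau - (-s2) * s2 = 2 * (1-tau)" using s2sq tt by (algebra | simp)
  have b: "(-tau) * s2 + (-s2) * tau = 2 * (-tau*s2)" using s2sq tt by (algebra | simp)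
  show ?thesis by (rule half[OF e[unfolded a b]])
qed

lemma q8: "2 * xi^8 = Complex (tau-1) (-tau*s2)"
proof -
  have e: "4 * xi^8 = Complex ((1-tau) * tau - (-tau*s2) * s2) ((1-tau) * s2 + (-tau*s2) * tau)"
    by (rule xi_step[OF q7]) simp
  have a: "(1-tau) * tau - (-tau*s2) * s2 = 2 * (tau-1)" using s2sq tt by (algebra | simp)
  have b: "(1-tau) * s2 + (-tau*s2) * tau = 2 * (-tau*s2)" using s2sq tt by (algebra | simp)
  show ?thesis by (rule half[OF e[unfolded a b]])
qed

lemma q9: "2 * xi^9 = Complex (tau) (-s2)"
proof -
  have e: "4 * xi^9 = Complex ((tau-1) * tau - (-tau*s2) * s2) ((tau-1) * s2 + (-tau*s2) * tau)"
    by (rule xi_step[OF q8]) simp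
  have a: "(tau-1) * tau - (-tau*s2) * s2 = 2 * (tau)" using s2sq tt by (algebra | simp)
  have b: "(tau-1) * s2 + (-tau*s2) * tau = 2 * (-s2)" using s2sq tt by (algebra | simp)
  show ?thesis by (rule half[OF e[unfolded a b]])
qed

lemma sum10: fixes f :: "nat \<Rightarrow> 'a::comm_monoid_add"
  shows "(\<Sum>j<10. f j) = f 0 + f 1 + f 2 + f 3 + f 4 + f 5 + f 6 + f 7 + f 8 + f 9"
proof -
  have "{..<10::nat} = {0,1,2,3,4,5,6,7,8,9}" by auto
  thus ?thesis by (simp add: add_ac)
qed

lemma tri3: "\<bar>(A::real) + B + C\<bar> \<le> \<bar>A\<bar> + \<bar>B\<bar> + \<bar>C\<bar>"
  by (rule order_trans[OF abs_triangle_ineq add_right_mono[OF abs_triangle_ineq]])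

lemma bnd:
  fixes r0 r1 r2 r3 r4 r5 r6 r7 r8 r9 p q :: real
  assumes "\<bar>p\<bar> \<le> 1" "\<bar>q\<bar> \<le> 1"
    and "r0 \<ge> 0" "r1 \<ge> 0" "r2 \<ge> 0" "r3 \<ge> 0" "r4 \<ge> 0" "r5 \<ge> 0" "r6 \<ge> 0" "r7 \<ge> 0" "r8 \<ge> 0" "r9 \<ge> 0"
  shows "\<bar>(r0 - r5) + p * (r1 - r4 - r6 + r9) + q * (r2 - r3 - r7 + r8)\<bar> \<le> r0+r1+r2+r3+r4+r5+r6+r7+r8+r9"
proof -
  have a1: "\<bar>p * (r1 - r4 - r6 + r9)\<bar> \<le> \<bar>r1 - r4 - r6 + r9\<bar>"
    unfolding abs_mult using assms(1) by (simp add: mult_left_le_one_le)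
  have a2: "\<bar>q * (r2 - r3 - r7 + r8)\<bar> \<le> \<bar>r2 - r3 - r7 + r8\<bar>"
    unfolding abs_mult using assms(2) by (simp add: mult_left_le_one_le)
  have b1: "\<bar>r1 - r4 - r6 + r9\<bar> \<le> r1 + r4 + r6 + r9" unfolding abs_le_iff using assms by linarith
  have b2: "\<bar>r2 - r3 - r7 + r8\<bar> \<le> r2 + r3 + r7 + r8" unfolding abs_le_iff using assms by linarith
  have b0: "\<bar>r0 - r5\<bar> \<le> r0 + r5" unfolding abs_le_iff using assms by linarith
  have t: "\<bar>(r0 - r5) + p * (r1 - r4 - r6 + r9) + q * (r2 - r3 - r7 + r8)\<bar>
     \<le> \<bar>r0 - r5\<bar> + \<bar>p * (r1 - r4 - r6 + r9)\<bar> + \<bar>q * (r2 - r3 - r7 + r8)\<bar>"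
    by (rule tri3)
  show ?thesis using t a1 a2 b1 b2 b0 by linarith
qed

lemma s2_pos: "s2 > 0" using S_pos unfolding s2_def by simp

theorem proposition6p9:
  fixes n :: nat
  assumes "n \<ge> 1"
  shows "L n \<subseteq> Sigma_qc {- real n .. real n} \<inter> {- real n .. real n}"
proof
  fix x assume "x \<in> L n"
  then obtain c :: "nat \<Rightarrow> nat" where cs: "(\<Sum>j<10. c j) \<le> n"
    and cx: "complex_of_real x = (\<Sum>j<10. of_nat (c j) * xi ^ j)"
    unfolding L_def by blast
  define r where "r j = real (c j)" for j
  have rnn: "r j \<ge> 0" for j unfolding r_def by simp
  have rs: "r 0 + r 1 + r 2 + r 3 + r 4 + r 5 + r 6 + r 7 + r 8 + r 9 \<le> real n"
  proof -
    have "real (\<Sum>j<10. c j) \<le> real n" using cs of_nat_le_iff by blast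
    thus ?thesis unfolding r_def sum10 by simp
  qed
  have "complex_of_real (2 * x) = (\<Sum>j<10. of_real (r j) * (2 * xi ^ j))"
    unfolding of_real_mult cx r_def by (simp add: sum_distrib_left algebra_simps)
  also have "\<dots> = of_real (r 0) * Complex 2 0 + of_real (r 1) * Complex tau s2
     + of_real (r 2) * Complex (tau-1) (tau*s2) + of_real (r 3) * Complex (1-tau) (tau*s2)
     + of_real (r 4) * Complex (-tau) s2 + of_real (r 5) * Complex (-2) 0
     + of_real (r 6) * Complex (-tau) (-s2) + of_real (r 7) * Complex (1-tau) (-tau*s2)
     + of_real (r 8) * Complex (tau-1) (-tau*s2) + of_real (r 9) * Complex tau (-s2)"
    unfolding sum10 q0 q1 q2 q3 q4 q5 q6 q7 q8 q9 by simp
  finally have E: "complex_of_real (2 * x) = \<dots>" .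
  have ReE: "2 * x = 2 * r 0 + tau * r 1 + (tau - 1) * r 2 + (1 - tau) * r 3 - tau * r 4 - 2 * r 5
      - tau * r 6 + (1 - tau) * r 7 + (tau - 1) * r 8 + tau * r 9"
    using arg_cong[OF E, of Re] by (simp add: algebra_simps)
  have ImE: "0 = s2 * ((r 1 + r 4 - r 6 - r 9) + tau * (r 2 + r 3 - r 7 - r 8))"
    using arg_cong[OF E, of Im] by (simp add: algebra_simps)
  define A :: int where "A = int (c 1) + int (c 4) - int (c 6) - int (c 9)"
  define B :: int where "B = int (c 2) + int (c 3) - int (c 7) - int (c 8)"
  have "of_int A + of_int B * tau = 0"
  proof -
    have "(r 1 + r 4 - r 6 - r 9) + tau * (r 2 + r 3 - r 7 - r 8) = 0" using ImE s2_pos by simp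
    thus ?thesis unfolding A_def B_def r_def by (simp add: algebra_simps)
  qed
  hence AB: "A = 0" "B = 0" using Ztau_indep by auto
  have rA: "r 1 + r 4 - r 6 - r 9 = 0" using AB(1) unfolding A_def r_def by linarith
  have rB: "r 2 + r 3 - r 7 - r 8 = 0" using AB(2) unfolding B_def r_def by linarith
  define a :: int where "a = int (c 0) - int (c 5) - int (c 8) + int (c 3)"
  define b :: int where "b = int (c 9) - int (c 4) + int (c 8) - int (c 3)"
  have xa: "x = of_int a + of_int b * tau"
  proof -
    have "2 * x - 2 * (of_int a + of_int b * tau) = tau * (r 1 + r 4 - r 6 - r 9) + (tau - 1) * (r 2 + r 3 - r 7 - r 8)"
      unfolding ReE a_def b_def r_def by (simp add: algebra_simps)
    thus ?thesis using rA rB by simp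
  qed
  have qx: "qconj x = (r 0 - r 5) + ((1 - tau)/2) * (r 1 - r 4 - r 6 + r 9) + (- (tau/2)) * (r 2 - r 3 - r 7 + r 8)"
  proof -
    have "qconj x = of_int a + of_int b * (1 - tau)" unfolding xa by (rule qconj_Ztau)
    also have "\<dots> - ((r 0 - r 5) + ((1 - tau)/2) * (r 1 - r 4 - r 6 + r 9) + (- (tau/2)) * (r 2 - r 3 - r 7 + r 8))
       = ((tau - 1)/2) * (r 1 + r 4 - r 6 - r 9) + (tau/2) * (r 2 + r 3 - r 7 - r 8)"
      unfolding a_def b_def r_def by (simp add: field_simps)
    also have "\<dots> = 0" unfolding rA rB by simp
    finally show ?thesis by simp
  qed
  have "2 * x = 2 * ((r 0 - r 5) + (tau/2) * (r 1 - r 4 - r 6 + r 9) + ((tau - 1)/2) * (r 2 - r 3 - r 7 + r 8))"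
    unfolding ReE by (simp add: field_simps)
  hence xx: "x = (r 0 - r 5) + (tau/2) * (r 1 - r 4 - r 6 + r 9) + ((tau - 1)/2) * (r 2 - r 3 - r 7 + r 8)"
    by simp
  have tb: "\<bar>tau/2\<bar> \<le> 1" "\<bar>(tau - 1)/2\<bar> \<le> 1" "\<bar>(1 - tau)/2\<bar> \<le> 1" "\<bar>-(tau/2)\<bar> \<le> 1"
    using tau_bounds by (simp_all add: abs_le_iff)
  have "\<bar>x\<bar> \<le> real n" unfolding xx by (rule order_trans[OF bnd[OF tb(1,2) rnn[of 0] rnn[of 1] rnn[of 2] rnn[of 3] rnn[of 4] rnn[of 5] rnn[of 6] rnn[of 7] rnn[of 8] rnn[of 9]] rs])
  moreover have "\<bar>qconj x\<bar> \<le> real n" unfolding qx by (rule order_trans[OF bnd[OF tb(3,4) rnn[of 0] rnn[of 1] rnn[of 2] rnn[of 3] rnn[of 4] rnn[of 5] rnn[of 6] rnn[of 7] rnn[of 8] rnn[of 9]] rs])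
  moreover have "x \<in> Ztau" unfolding Ztau_def using xa by blast
  ultimately show "x \<in> Sigma_qc {- real n .. real n} \<inter> {- real n .. real n}"
    unfolding Sigma_qc_def by (simp add: abs_le_iff)
qed

end
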